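(* Let $A=(a,\ ha+d,\ ha+2d,\ ha+4d,\ \dots,\ ha+2kd)$ where $\gcd(a,d)=1$, $a,h,d,k\in\mathbb{P}$, $a>2$, $2\le 2k\le a-1$. Then: (i) if $a$ is even, write $a-1=2ks+t$ with $1\le t\le 2k$; then $$g(A)=\begin{cases}ha\big(\lfloor\frac{a-2}{2k}\rfloor+2\big)+(a-1)d-a & \text{if } t\ne1,\\ ha\big(\frac{a-2}{2k}+1\big)+(a-1)d-a & \text{if } t=1;\end{cases}$$ (ii) if $a$ is odd, write $a-2=2ks+t$ with $1\le t\le 2k$; then $$g(A)=\begin{cases}\max\Big\{ha\big(\lfloor\frac{a-2}{2k}\rfloor+1\big)+(a-1)d-a,\ ha\big(\lfloor\frac{a-3}{2k}\rfloor+2\big)+(a-2)d-a\Big\} & \text{if } t\ne1,\\ ha\big(\lfloor\frac{a-2}{2k}\rfloor+1\big)+(a-1)d-a & \text{if } t=1.\end{cases}$$ Moreover, with $s=\lfloor\frac{a-2}{2k}\rfloor$ and $t=a-1-2k\lfloor\frac{a-2}{2k}\rfloor$, $$n(A)=h(s^2k+st-s-1)+(a-1)\Big(h+\frac d2-\frac12\Big)+h\Big\lceil\frac t2\Big\rceil.$$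
   Context: For a tuple $A$ of positive integers with $\gcd(A)=1$, $\mathcal{NR}(A)$ is the finite set of nonnegative integers that cannot be written as a nonnegative integer combination of the entries of $A$; $g(A)=\max\mathcal{NR}(A)$ and $n(A)=|\mathcal{NR}(A)|$. $\mathbb{P}=\{1,2,\dots\}$. *)

theory Defs
  imports Complex_Main
begin

definition representable :: "nat list \<Rightarrow> nat \<Rightarrow> bool" where
  "representable A m \<longleftrightarrow>
     (\<exists>c :: nat list. length c = length A \<and> m = (\<Sum>i<length A. c ! i * A ! i))"

definition NR :: "nat list \<Rightarrow> nat set" where
  "NR A = {m. \<not> representable A m}"

definition frob :: "nat list \<Rightarrow> int" where
  "frob A = int (Max (NR A))"

definition genus :: "nat list \<Rightarrow> nat" where
  "genus A = card (NR A)"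

definition tupA :: "nat \<Rightarrow> nat \<Rightarrow> nat \<Rightarrow> nat \<Rightarrow> nat list" where
  "tupA a h d k = a # (h*a + d) # map (\<lambda>j. h*a + 2*j*d) [1..<k+1]"

end

theory Submission imports Defs "HOL-Number_Theory.Number_Theory" begin


lemma rep0: "representable A 0"
  unfolding representable_def
  by (rule exI[of _ "replicate (length A) 0"]) simp

lemma rep_add:
  assumes "representable A m" "representable A n"
  shows "representable A (m + n)"
proof -
  obtain c where c: "length c = length A" "m = (\<Sum>i<length A. c ! i * A ! i)"
    using assms(1) unfolding representable_def by blast
  obtain e where e: "length e = length A" "n = (\<Sum>i<length A. e ! i * A ! i)"
    using assms(2) unfolding representable_def by blast
  let ?c = "map (\<lambda>i. c ! i + e ! i) [0..<length A]"
  have "(\<Sum>i<length A. ?c ! i * A ! i) = (\<Sum>i<length A. c ! i * A ! i + e ! i * A ! i)"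
    by (rule sum.cong) (auto simp: algebra_simps)
  also have "\<dots> = m + n" using c e by (simp add: sum.distrib)
  finally show ?thesis unfolding representable_def
    by (intro exI[of _ ?c]) auto
qed

lemma rep_nth:
  assumes "i < length A"
  shows "representable A (A ! i)"
proof -
  let ?c = "(replicate (length A) 0)[i := (1::nat)]"
  have "(\<Sum>j<length A. ?c ! j * A ! j) = (\<Sum>j<length A. (if j = i then A ! i else 0))"
    by (rule sum.cong) (auto simp: assms nth_list_update)
  also have "\<dots> = A ! i" using assms by simp
  finally show ?thesis unfolding representable_def
    by (intro exI[of _ ?c]) auto
qed

lemma rep_mult:
  assumes "representable A m"
  shows "representable A (j * m)"
  by (induction j) (auto intro: rep0 rep_add assms)

lemma tupA_length: "length (tupA a h d k) = k + 2"
  by (simp add: tupA_def)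

lemma tupA_0: "tupA a h d k ! 0 = a" by (simp add: tupA_def)
lemma tupA_1: "tupA a h d k ! Suc 0 = h*a + d" by (simp add: tupA_def)
lemma tupA_j: "i < k \<Longrightarrow> tupA a h d k ! (Suc (Suc i)) = h*a + 2*(i+1)*d"
  by (simp add: tupA_def del: upt_Suc)

lemma rep_form:
  assumes "representable (tupA a h d k) m"
  shows "\<exists>c0 u v y. m = c0*a + (u+v)*h*a + (u+2*y)*d \<and> v \<le> y \<and> y \<le> k*v"
proof -
  let ?A = "tupA a h d k"
  obtain c where c: "length c = length ?A" "m = (\<Sum>i<length ?A. c ! i * ?A ! i)"
    using assms unfolding representable_def by blast
  have "m = (\<Sum>i<Suc (Suc k). c ! i * ?A ! i)" using c by (simp add: tupA_length)
  also have "\<dots> = c!0 * a + c!1 * (h*a+d) + (\<Sum>i<k. c ! (Suc (Suc i)) * ?A ! (Suc (Suc i)))"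
    unfolding sum.lessThan_Suc_shift by (simp add: tupA_0 tupA_1)
  also have "(\<Sum>i<k. c ! (Suc (Suc i)) * ?A ! (Suc (Suc i))) =
     (\<Sum>i<k. c ! (Suc (Suc i)) * (h*a) + ((i+1) * c ! (Suc (Suc i))) * (2*d))"
    by (rule sum.cong) (auto simp: tupA_j algebra_simps)
  also have "\<dots> = (\<Sum>i<k. c ! (Suc (Suc i))) * (h*a) + (\<Sum>i<k. (i+1) * c ! (Suc (Suc i))) * (2*d)"
    by (simp only: sum.distrib sum_distrib_right)
  finally have m: "m = c!0 * a + c!1 * (h*a+d) + ((\<Sum>i<k. c ! (Suc (Suc i))) * (h*a) + (\<Sum>i<k. (i+1) * c ! (Suc (Suc i))) * (2*d))" .
  define v where "v = (\<Sum>i<k. c ! (Suc (Suc i)))"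
  define y where "y = (\<Sum>i<k. (i+1) * c ! (Suc (Suc i)))"
  have vy: "v \<le> y" unfolding v_def y_def by (rule sum_mono) simp
  have "y \<le> (\<Sum>i<k. k * c ! (Suc (Suc i)))" unfolding y_def
    apply (rule sum_mono) apply (rule mult_le_mono1) by simp
  then have yk: "y \<le> k * v" unfolding v_def by (simp add: sum_distrib_left)
  have "m = c!0*a + (c!1+v)*h*a + (c!1+2*y)*d" using m unfolding v_def[symmetric] y_def[symmetric]
    by (simp add: algebra_simps)
  then show ?thesis using vy yk by blast
qed

lemma rep_vy:
  assumes "v \<le> y" "y \<le> k*v"
  shows "representable (tupA a h d k) (v*h*a + 2*y*d)"
  using assms
proof (induction v arbitrary: y)
  case 0
  then show ?case by (simp add: rep0)
next
  case (Suc v)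
  define j where "j = min k (y - v)"
  have "k \<noteq> 0"
  proof
    assume "k = 0" then show False using Suc.prems by simp
  qed
  then have j1: "1 \<le> j" "j \<le> k" using Suc.prems by (auto simp: j_def)
  have r1: "v \<le> y - j" "y - j \<le> k*v" using Suc.prems by (cases "k \<le> y - v"; auto simp: j_def min_def)+
  have "representable (tupA a h d k) (v*h*a + 2*(y-j)*d)" using Suc.IH r1 by blast
  moreover have "representable (tupA a h d k) (h*a + 2*j*d)"
  proof -
    obtain j' where jj: "j = Suc j'" using j1 by (cases j) auto
    have "tupA a h d k ! (Suc (Suc j')) = h*a + 2*j*d" using j1 jj tupA_j[of j' k a h d] by simp
    moreover have "Suc (Suc j') < length (tupA a h d k)" using j1 jj by (simp add: tupA_length)
    ultimately show ?thesis by (metis rep_nth)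
  qed
  ultimately have "representable (tupA a h d k) (v*h*a + 2*(y-j)*d + (h*a + 2*j*d))" by (rule rep_add)
  moreover have "v*h*a + 2*(y-j)*d + (h*a + 2*j*d) = Suc v*h*a + 2*y*d"
  proof -
    have "j \<le> y" using j1 Suc.prems by (auto simp: j_def)
    then obtain z where z: "y = z + j" by (metis le_add_diff_inverse2)
    show ?thesis unfolding z by (simp add: algebra_simps)
  qed
  ultimately show ?case by simp
qed



definition ff :: "nat \<Rightarrow> nat \<Rightarrow> nat" where
  "ff k x = (if even x then (x + 2*k - 1) div (2*k) else 1 + (x + 2*k - 2) div (2*k))"

lemma divb:
  assumes "(0::nat) < n"
  shows "(m div n) * n \<le> m" "m < (m div n) * n + n"
proof -
  have e: "m = (m div n) * n + m mod n" by simp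
  show "(m div n) * n \<le> m" by (metis e le_add1)
  have "m mod n < n" using assms by simp
  then show "m < (m div n) * n + n" using e by linarith
qed

lemma ff_le_even:
  assumes "k > 0" "even x" "x \<le> 2*k*M"
  shows "ff k x \<le> M"
proof -
  have "x + 2*k - 1 < (M+1) * (2*k)" using assms by (simp add: algebra_simps)
  then have "(x + 2*k - 1) div (2*k) < M+1" by (rule less_mult_imp_div_less)
  then show ?thesis using assms by (simp add: ff_def)
qed

lemma ff_le_odd:
  assumes "k > 0" "odd x" "x + 2*k \<le> 2*k*M + 1"
  shows "ff k x \<le> M"
proof -
  have M: "M \<ge> 1" using assms by (cases M) auto
  have "x + 2*k - 2 < M * (2*k)" using assms by (simp add: algebra_simps)
  then have "(x + 2*k - 2) div (2*k) < M" by (rule less_mult_imp_div_less)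
  then show ?thesis using assms by (simp add: ff_def)
qed

lemma ff_le_big:
  assumes "k > 0" "x + 2*k \<le> 2*k*M"
  shows "ff k x \<le> M"
proof -
  have M: "M \<ge> 1" using assms by (cases M) auto
  have "x + 2*k - 1 < M * (2*k)" using assms by (simp add: algebra_simps)
  then have a1: "(x + 2*k - 1) div (2*k) < M" by (rule less_mult_imp_div_less)
  have "(x + 2*k - 2) div (2*k) \<le> (x + 2*k - 1) div (2*k)" by (rule div_le_mono) simp
  then show ?thesis using a1 by (simp add: ff_def)
qed

lemma ff_odd: "k > 0 \<Longrightarrow> ff k (2*y+1) = 1 + ff k (2*y)"
  by (simp add: ff_def)

lemma ff_even_vy:
  assumes "k > 0"
  shows "ff k (2*y) \<le> y \<and> y \<le> k * ff k (2*y)"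
proof -
  let ?v = "ff k (2*y)"
  have v: "?v = (2*y + 2*k - 1) div (2*k)" by (simp add: ff_def)
  have b1: "?v * (2*k) \<le> 2*y + 2*k - 1" "2*y + 2*k - 1 < ?v * (2*k) + 2*k"
    using divb[of "2*k" "2*y + 2*k - 1"] assms v by auto
  have "2*y < ?v * (2*k) + 1" using b1(2) assms by linarith
  then have "y \<le> k * ?v" by (simp add: algebra_simps)
  moreover have "?v \<le> y"
  proof (cases "y = 0")
    case True
    have "2*k - 1 < 1 * (2*k)" using assms by simp
    then have "(2*k - 1) div (2*k) < 1" by (rule less_mult_imp_div_less)
    then show ?thesis using True v by simp
  next
    case False
    have "2*y + 2*k - 1 < (y+1) * (2*k)"
    proof -
      have "y \<le> k * y" using assms by simp
      moreover have "(y+1)*(2*k) = 2*(k*y) + 2*k" by (simp add: algebra_simps)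
      ultimately show ?thesis using False assms by linarith
    qed
    then have "?v < y + 1" unfolding v by (rule less_mult_imp_div_less)
    then show ?thesis by simp
  qed
  ultimately show ?thesis by simp
qed

lemma ff_mono:
  assumes "x \<le> y" "even x = even y"
  shows "ff k x \<le> ff k y"
  using assms by (auto simp: ff_def intro: div_le_mono)



lemma X_bounds:
  fixes k u v y :: nat
  assumes "k > 0" "v \<le> y" "y \<le> k*v"
  shows "u + 2*y \<le> 2*k*(u+v)" "odd (u+2*y) \<Longrightarrow> u + 2*y + 2*k \<le> 2*k*(u+v) + 1"
proof -
  have "u \<le> k*u" using assms by simp
  moreover have "2*k*(u+v) = 2*(k*u) + 2*(k*v)" by (simp add: algebra_simps)
  ultimately show "u + 2*y \<le> 2*k*(u+v)" using assms by linarith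
next
  assume o: "odd (u+2*y)"
  then have "u \<ge> 1" by (cases u) auto
  then obtain u' where u: "u = u' + 1" by (metis add.commute le_Suc_ex)
  have "u' \<le> k*u'" using assms by simp
  moreover have "2*k*(u+v) = 2*(k*u') + 2*k + 2*(k*v)" unfolding u by (simp add: algebra_simps)
  ultimately show "u + 2*y + 2*k \<le> 2*k*(u+v) + 1" using assms unfolding u by linarith
qed

locale frobl =
  fixes a h d k :: nat
  assumes cop: "coprime a d" and hp: "h > 0" and dp: "d > 0" and kp: "k > 0" and ak: "2*k+1 \<le> a"
begin

abbreviation "AA \<equiv> tupA a h d k"
abbreviation w :: "nat \<Rightarrow> nat" where "w x \<equiv> ff k x * h * a + x * d"

lemma W1: "representable AA (w x)"
proof (cases "even x")
  case True
  then obtain y where y: "x = 2*y" by blast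
  have "ff k (2*y) \<le> y \<and> y \<le> k * ff k (2*y)" using kp by (rule ff_even_vy)
  then have "representable AA (ff k (2*y) * h * a + 2*y*d)" using rep_vy by blast
  then show ?thesis using y by simp
next
  case False
  then obtain y where y: "x = 2*y+1" using oddE by blast
  have "ff k (2*y) \<le> y \<and> y \<le> k * ff k (2*y)" using kp by (rule ff_even_vy)
  then have r1: "representable AA (ff k (2*y) * h * a + 2*y*d)" using rep_vy by blast
  have "representable AA (AA ! Suc 0)" by (rule rep_nth) (simp add: tupA_length)
  then have r2: "representable AA (h*a + d)" by (simp add: tupA_1)
  have "representable AA ((h*a+d) + (ff k (2*y) * h * a + 2*y*d))" using r2 r1 by (rule rep_add)
  moreover have "(h*a+d) + (ff k (2*y) * h * a + 2*y*d) = w x"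
    using y ff_odd[OF kp, of y] by (simp add: algebra_simps)
  ultimately show ?thesis by simp
qed

lemma ap: "a > 0" using ak by simp

lemma W2:
  assumes "representable AA m" "x < a" "[x*d = m] (mod a)"
  shows "w x \<le> m"
proof -
  obtain c0 u v y where m: "m = c0*a + (u+v)*h*a + (u+2*y)*d" and vy: "v \<le> y" "y \<le> k*v"
    using rep_form[OF assms(1)] by blast
  define X where "X = u + 2*y"
  define M where "M = u + v"
  have m2: "m = (c0 + M*h)*a + X*d" using m unfolding X_def M_def by (simp add: algebra_simps)
  have "[m = X*d] (mod a)" unfolding m2 by (simp add: cong_def)
  then have "[x*d = X*d] (mod a)" using assms(3) by (metis cong_trans)
  then have "[x = X] (mod a)" using cop by (simp add: cong_mult_rcancel_nat coprime_commute)
  then have Xm: "X mod a = x" using assms(2) by (simp add: cong_def)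
  have xX: "x \<le> X" using Xm by (metis mod_less_eq_dividend)
  have b1: "X \<le> 2*k*M" "odd X \<Longrightarrow> X + 2*k \<le> 2*k*M + 1"
    using X_bounds[OF kp vy] unfolding X_def M_def by auto
  have fM: "ff k x \<le> M"
  proof (cases "X < a")
    case True
    then have "X = x" using Xm by simp
    then show ?thesis using b1 ff_le_even[OF kp] ff_le_odd[OF kp] by blast
  next
    case False
    have "X = (X div a) * a + x" using Xm by (metis div_mult_mod_eq)
    moreover have "0 < X div a" using False ap by (simp add: div_greater_zero_iff)
    then have "X div a \<ge> 1" by simp
    ultimately have "X \<ge> a + x" by (metis add_le_mono1 mult_1 mult_le_mono1)
    then have "x + 2*k \<le> 2*k*M" using b1 ak by linarith
    then show ?thesis by (rule ff_le_big[OF kp])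
  qed
  have "ff k x * h * a \<le> M * h * a" using mult_le_mono1[OF mult_le_mono1[OF fM]] by blast
  moreover have "x * d \<le> X * d" using xX by simp
  moreover have "m = c0*a + M*h*a + X*d" unfolding m2 by (simp add: algebra_simps)
  ultimately show ?thesis by linarith
qed

lemma w_cong: "[w x = x*d] (mod a)"
  by (simp add: cong_def)

lemma rep_iff:
  assumes "x < a" "[x*d = n] (mod a)"
  shows "representable AA n \<longleftrightarrow> w x \<le> n"
proof
  assume "representable AA n" then show "w x \<le> n" using W2 assms by blast
next
  assume le: "w x \<le> n"
  have "[n = w x] (mod a)" using assms(2) w_cong by (metis cong_sym cong_trans)
  then obtain q where q: "n = q * a + w x" using cong_le_nat[OF le] by blast
  have "representable AA (q * a)"
  proof -
    have "representable AA (AA ! 0)" by (rule rep_nth) (simp add: tupA_length)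
    then show ?thesis by (simp add: tupA_0 rep_mult)
  qed
  then show "representable AA n" unfolding q using W1 by (rule rep_add)
qed

lemma resid: "\<exists>!x. x < a \<and> [x*d = n] (mod a)"
proof -
  have "coprime d a" using cop by (simp add: coprime_commute)
  from cong_solve_unique[OF this, of n] ap show ?thesis by (simp add: mult.commute)
qed

lemma resid_unique: "x < a \<Longrightarrow> x' < a \<Longrightarrow> [x*d = n] (mod a) \<Longrightarrow> [x'*d = n] (mod a) \<Longrightarrow> x = x'"
  using resid[of n] by blast

end


lemma card_res:
  fixes a W :: nat
  assumes "0 < a"
  shows "card {n. n < W \<and> n mod a = W mod a} = W div a"
proof -
  have "{n. n < W \<and> n mod a = W mod a} = (\<lambda>j. j*a + W mod a) ` {..<W div a}"
  proof (intro equalityI subsetI)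
    fix n assume n: "n \<in> {n. n < W \<and> n mod a = W mod a}"
    then have e: "n = (n div a)*a + W mod a" "W = (W div a)*a + W mod a" by (simp_all, metis div_mult_mod_eq)
    have "n < W" using n by simp
    then have "(n div a)*a < (W div a)*a" using e by linarith
    then have "n div a < W div a" by (simp add: mult_less_cancel2)
    then show "n \<in> (\<lambda>j. j*a + W mod a) ` {..<W div a}" using e(1) by blast
  next
    fix n assume "n \<in> (\<lambda>j. j*a + W mod a) ` {..<W div a}"
    then obtain j where j: "j < W div a" "n = j*a + W mod a" by blast
    have "Suc j * a \<le> (W div a) * a" using j(1) by (intro mult_le_mono1) simp
    then have "j*a + a \<le> (W div a) * a" by simp
    moreover have "W = (W div a)*a + W mod a" by simp
    moreover have "W mod a < a" using assms by simp
    ultimately have "n < W" using j(2) by linarith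
    moreover have "n mod a = W mod a" using j(2) by simp
    ultimately show "n \<in> {n. n < W \<and> n mod a = W mod a}" by simp
  qed
  moreover have "inj_on (\<lambda>j. j*a + W mod a) {..<W div a}" using assms by (auto simp: inj_on_def)
  ultimately show ?thesis by (simp add: card_image)
qed

context frobl begin

definition NN :: "nat \<Rightarrow> nat set" where "NN x = {n. n < w x \<and> [x*d = n] (mod a)}"

lemma NR_eq: "NR AA = (\<Union>x\<in>{..<a}. NN x)"
proof (intro equalityI subsetI)
  fix n assume n: "n \<in> NR AA"
  obtain x where x: "x < a" "[x*d = n] (mod a)" using resid[of n] by blast
  then have "n < w x" using n rep_iff[OF x] by (auto simp: NR_def)
  then show "n \<in> (\<Union>x\<in>{..<a}. NN x)" using x by (auto simp: NN_def)
next
  fix n assume "n \<in> (\<Union>x\<in>{..<a}. NN x)"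
  then obtain x where x: "x < a" "[x*d = n] (mod a)" "n < w x" by (auto simp: NN_def)
  then show "n \<in> NR AA" using rep_iff[OF x(1,2)] by (auto simp: NR_def)
qed

lemma NN_alt: "NN x = {n. n < w x \<and> n mod a = w x mod a}"
proof -
  have "w x mod a = x * d mod a" by simp
  then show ?thesis unfolding NN_def cong_def by auto
qed

lemma NN_card: "card (NN x) = w x div a"
  unfolding NN_alt using card_res[OF ap] by blast

lemma NN_finite: "finite (NN x)"
  unfolding NN_def by auto

lemma genus_sum: "genus AA = (\<Sum>x<a. ff k x * h + x * d div a)"
proof -
  have "genus AA = card (\<Union>x\<in>{..<a}. NN x)" by (simp add: genus_def NR_eq)
  also have "\<dots> = (\<Sum>x<a. card (NN x))"
  proof (rule card_UN_disjoint)
    show "\<forall>i\<in>{..<a}. \<forall>j\<in>{..<a}. i \<noteq> j \<longrightarrow> NN i \<inter> NN j = {}"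
      using resid_unique by (auto simp: NN_def)
  qed (auto simp: NN_finite)
  also have "\<dots> = (\<Sum>x<a. ff k x * h + x * d div a)"
  proof (rule sum.cong)
    fix x
    have "w x div a = ff k x * h + x * d div a" using ap
      by (simp add: mult.assoc[symmetric])
    then show "card (NN x) = ff k x * h + x * d div a" by (simp add: NN_card)
  qed simp
  finally show ?thesis .
qed

definition Wm where "Wm = max (w (a-1)) (w (a-2))"

lemma w_mono: "x \<le> y \<Longrightarrow> even x = even y \<Longrightarrow> w x \<le> w y"
  using ff_mono[of x y k] by (intro add_mono mult_le_mono1) auto

lemma w_le: "x < a \<Longrightarrow> w x \<le> Wm"
proof (cases "even x = even (a-1)")
  case True
  assume "x < a"
  then have "w x \<le> w (a-1)" using w_mono[of x "a-1"] True by simp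
  then show ?thesis unfolding Wm_def by simp
next
  case False
  assume x: "x < a"
  then have "x \<le> a - 2" using False by (cases "x = a-1") auto
  moreover have "a - 1 = Suc (a-2)" using ak kp by simp
  then have "even x = even (a-2)" using False by simp
  ultimately have "w x \<le> w (a-2)" using w_mono[of x "a-2"] by simp
  then show ?thesis unfolding Wm_def by simp
qed

lemma ff_pos: "x \<ge> 1 \<Longrightarrow> ff k x \<ge> 1"
proof (cases "even x")
  case True
  assume "x \<ge> 1"
  then have "x \<ge> 2" using True by presburger
  then have "2*k \<le> x + 2*k - 1" by simp
  then have "0 < (x + 2*k - 1) div (2*k)" using kp by (simp add: div_greater_zero_iff)
  then have "1 \<le> (x + 2*k - 1) div (2*k)" by simp
  then show ?thesis using True by (simp add: ff_def)
qed (simp add: ff_def)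

lemma frob_eq: "frob AA = int Wm - int a"
proof -
  obtain x0 where x0: "x0 < a" "x0 \<ge> 1" "Wm = w x0"
  proof (cases "w (a-1) \<le> w (a-2)")
    case True
    then have "Wm = w (a-2)" unfolding Wm_def by simp
    moreover have "a - 2 < a" "a - 2 \<ge> 1" using ak kp by auto
    ultimately show ?thesis using that by blast
  next
    case False
    then have "Wm = w (a-1)" unfolding Wm_def by simp
    moreover have "a - 1 < a" "a - 1 \<ge> 1" using ak kp by auto
    ultimately show ?thesis using that by blast
  qed
  have "ff k x0 * h \<ge> 1" using ff_pos[OF x0(2)] hp by simp
  then have "1 * a \<le> ff k x0 * h * a" by (intro mult_le_mono1)
  then have aW: "a \<le> Wm" using x0(3) by linarith
  have fin: "finite (NR AA)" unfolding NR_eq using NN_finite by auto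
  have mem: "Wm - a \<in> NR AA"
  proof -
    have "[x0*d = Wm - a] (mod a)"
    proof -
      have e: "Wm = (Wm - a) + a" using aW by simp
      have "[Wm - a = (Wm - a) + a] (mod a)" by (simp add: cong_def)
      then have "[Wm - a = Wm] (mod a)" using e by simp
      then show ?thesis using x0(3) w_cong[of x0] by (metis cong_sym cong_trans)
    qed
    moreover have "Wm - a < w x0" using x0(3) ap aW by simp
    ultimately show ?thesis unfolding NR_eq NN_def using x0(1) by auto
  qed
  have ub: "n \<le> Wm - a" if "n \<in> NR AA" for n
  proof -
    have "n \<in> (\<Union>x\<in>{..<a}. NN x)" using that NR_eq by simp
    then obtain x where x: "x < a" "n < w x" "[x*d = n] (mod a)" by (auto simp: NN_def)
    have "[w x = n] (mod a)" using x(3) w_cong[of x] by (metis cong_trans)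
    then obtain q where q: "w x = q * a + n" using cong_le_nat[of n "w x" a] x(2) by auto
    then have "q \<ge> 1" using x(2) by (cases q) auto
    then have "n + a \<le> w x" using q by (metis add.commute add_le_mono1 mult_1 mult_le_mono1)
    then show ?thesis using w_le[OF x(1)] by linarith
  qed
  have "Max (NR AA) = Wm - a" using fin mem ub by (intro Max_eqI) auto
  then show ?thesis unfolding frob_def using aW by simp
qed

end


lemma pair_floor:
  fixes a d x :: nat
  assumes cop: "coprime a d" and x: "0 < x" "x < a"
  shows "x*d div a + (a-x)*d div a = d - 1"
proof -
  have nd1: "\<not> a dvd x*d" using cop x by (auto simp: coprime_dvd_mult_left_iff dest: dvd_imp_le)
  have nd2: "\<not> a dvd (a-x)*d" using cop x by (auto simp: coprime_dvd_mult_left_iff dest: dvd_imp_le)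
  define r1 where "r1 = x*d mod a"
  define r2 where "r2 = (a-x)*d mod a"
  have r1p: "0 < r1" "r1 < a" using nd1 x unfolding r1_def by (auto simp: mod_eq_0_iff_dvd[symmetric] gr0I)
  have r2p: "0 < r2" "r2 < a" using nd2 x unfolding r2_def by (auto simp: mod_eq_0_iff_dvd[symmetric] gr0I)
  have xa: "x + (a-x) = a" using x by simp
  have sum: "x*d + (a-x)*d = a*d" by (metis add_mult_distrib xa)
  have "(r1 + r2) mod a = (x*d + (a-x)*d) mod a" unfolding r1_def r2_def by (simp add: mod_add_eq)
  also have "\<dots> = 0" using sum by simp
  finally have "a dvd r1 + r2" by (simp add: mod_eq_0_iff_dvd)
  then obtain q where q: "r1 + r2 = a * q" by blast
  have "q = 1"
  proof -
    have "0 < a*q" using q r1p by linarith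
    then have q0: "0 < q" by simp
    have "a*q < a*2" using q r1p r2p by linarith
    then have "q < 2" by simp
    then show ?thesis using q0 by simp
  qed
  then have rr: "r1 + r2 = a" using q by simp
  have e1: "x*d = (x*d div a)*a + r1" unfolding r1_def by simp
  have e2: "(a-x)*d = ((a-x)*d div a)*a + r2" unfolding r2_def by simp
  have "(x*d div a + (a-x)*d div a) * a + a = a*d" using e1 e2 rr sum by (simp add: algebra_simps)
  then have eq: "(x*d div a + (a-x)*d div a + 1) * a = d * a" by (simp add: algebra_simps)
  have "a \<noteq> 0" using x by simp
  then have "x*d div a + (a-x)*d div a + 1 = d" using eq by (rule mult_right_cancel[THEN iffD1])
  then show ?thesis by simp
qed

lemma floor_sum:
  fixes a d :: nat
  assumes cop: "coprime a d" and a: "0 < a"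
  shows "2 * (\<Sum>x<a. x*d div a) = (a-1)*(d-1)"
proof -
  let ?g = "\<lambda>x. x*d div a"
  have s0: "(\<Sum>x<a. ?g x) = (\<Sum>x\<in>{1..<a}. ?g x)"
  proof -
    have "{..<a} = insert 0 {1..<a}" using a by auto
    then show ?thesis by simp
  qed
  have s1: "(\<Sum>x\<in>{1..<a}. ?g x) = (\<Sum>x\<in>{1..<a}. ?g (a - x))"
    by (subst sum.atLeastLessThan_rev) simp
  have "2 * (\<Sum>x<a. ?g x) = (\<Sum>x\<in>{1..<a}. ?g x) + (\<Sum>x\<in>{1..<a}. ?g (a - x))"
    using s0 s1 by simp
  also have "\<dots> = (\<Sum>x\<in>{1..<a}. ?g x + ?g (a-x))" by (simp add: sum.distrib)
  also have "\<dots> = (\<Sum>x\<in>{1..<a}. d - 1)"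
    by (rule sum.cong) (use pair_floor[OF cop] in auto)
  also have "\<dots> = (a-1)*(d-1)" by simp
  finally show ?thesis .
qed

lemma ff_block:
  assumes k: "k > 0" and i: "1 \<le> i" "i \<le> 2*k"
  shows "ff k (2*k*s+i) = (if even i \<or> i = 1 then s+1 else s+2)"
proof (cases "even i")
  case True
  then have i2: "i \<ge> 2" using i by presburger
  have "(2*k*s+i + 2*k - 1) div (2*k) = s+1"
    by (rule div_nat_eqI) (use i i2 k in \<open>auto simp: algebra_simps\<close>)
  then show ?thesis using True by (simp add: ff_def)
next
  case False
  show ?thesis
  proof (cases "i = 1")
    case True
    have "(2*k*s+i + 2*k - 2) div (2*k) = s"
      by (rule div_nat_eqI) (use True k in \<open>auto simp: algebra_simps\<close>)
    then show ?thesis using False True by (simp add: ff_def)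
  next
    case i1: False
    then have i3: "i \<ge> 3" using False i by presburger
    have "(2*k*s+i + 2*k - 2) div (2*k) = s+1"
      by (rule div_nat_eqI) (use i i3 k in \<open>auto simp: algebra_simps\<close>)
    then show ?thesis using False i1 by (simp add: ff_def)
  qed
qed

lemma SF_part:
  assumes k: "k > 0"
  shows "i \<le> 2*k \<Longrightarrow> (\<Sum>x<2*k*s+1+i. ff k x) = (\<Sum>x<2*k*s+1. ff k x) + i*(s+1) + (i-1) div 2"
proof (induction i)
  case 0
  then show ?case by simp
next
  case (Suc i)
  have "(\<Sum>x<2*k*s+1+Suc i. ff k x) = (\<Sum>x<2*k*s+1+i. ff k x) + ff k (2*k*s+Suc i)"
    by simp
  also have "ff k (2*k*s+Suc i) = (if even (Suc i) \<or> Suc i = 1 then s+1 else s+2)"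
    using ff_block[OF k, of "Suc i" s] Suc.prems by simp
  finally show ?case using Suc by (cases "even i"; cases i) (auto elim!: evenE oddE)
qed

lemma SF_E:
  assumes k: "k > 0"
  shows "(\<Sum>x<2*k*s+1. ff k x) + s = k*s*s + 2*k*s"
proof (induction s)
  case 0
  have "2*k - 1 < 2*k" using k by simp
  then show ?case by (simp add: ff_def)
next
  case (Suc s)
  have e: "2*k*Suc s+1 = 2*k*s+1+2*k" by simp
  have "(\<Sum>x<2*k*Suc s+1. ff k x) = (\<Sum>x<2*k*s+1. ff k x) + 2*k*(s+1) + (2*k-1) div 2"
    unfolding e by (subst SF_part[OF k]) (auto simp: algebra_simps)
  moreover have "(2*k-1) div 2 = k - 1" using k by presburger
  ultimately show ?case using Suc k by (simp add: algebra_simps)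
qed



context frobl begin

lemma frob_even:
  assumes ev: "even a" and st: "a - 1 = 2*k*s + t" "1 \<le> t" "t \<le> 2*k"
  shows "frob AA = (if t \<noteq> 1
           then int (h*a) * (int ((a-2) div (2*k)) + 2) + int (a-1) * int d - int a
           else int (h*a) * (int ((a-2) div (2*k)) + 1) + int (a-1) * int d - int a)"
proof -
  have a3: "a \<ge> 3" using ak kp by simp
  have ia: "int (a-1) = int a - 1" "int (a-2) = int a - 2" using a3 by auto
  have todd: "odd t"
  proof
    assume "even t"
    then have "even (a-1)" using st(1) by simp
    then show False using ev a3 by presburger
  qed
  have ds: "(a-2) div (2*k) = s"
    by (rule div_nat_eqI) (use st a3 in \<open>auto simp: algebra_simps\<close>)
  have f1: "ff k (a-1) = (if t = 1 then s+1 else s+2)"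
    using ff_block[OF kp st(2,3), of s] st(1) todd by auto
  have f12: "ff k (a-1) = 1 + ff k (a-2)"
  proof -
    have "odd (a-1)" "even (a-2)" using ev a3 by auto
    moreover have "a - 1 + 2*k - 2 = a - 2 + 2*k - 1" using a3 by simp
    ultimately show ?thesis by (simp add: ff_def)
  qed
  have "w (a-2) \<le> w (a-1)"
    using f12 by (intro add_mono mult_le_mono1) auto
  then have "Wm = w (a-1)" unfolding Wm_def by simp
  then have fr: "frob AA = int (ff k (a-1) * h * a + (a-1)*d) - int a" using frob_eq by simp
  show ?thesis
    unfolding fr f1 ds using ia by (simp; simp add: algebra_simps)
qed

lemma frob_odd:
  assumes od: "odd a" and st: "a - 2 = 2*k*s + t" "1 \<le> t" "t \<le> 2*k"
  shows "frob AA = (if t \<noteq> 1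
           then max (int (h*a) * (int ((a-2) div (2*k)) + 1) + int (a-1) * int d - int a)
                    (int (h*a) * (int ((a-3) div (2*k)) + 2) + int (a-2) * int d - int a)
           else int (h*a) * (int ((a-2) div (2*k)) + 1) + int (a-1) * int d - int a)"
proof -
  have a3: "a \<ge> 3" using ak kp by simp
  have ia: "int (a-1) = int a - 1" "int (a-2) = int a - 2" using a3 by auto
  have todd: "odd t"
  proof
    assume "even t"
    then have "even (a-2)" using st(1) by simp
    then show False using od a3 by presburger
  qed
  then have t2: "t + 1 \<le> 2*k" using st(3) by (metis add_le_same_cancel1 dvd_mult2 even_numeral le_neq_implies_less less_eq_Suc_le Suc_eq_plus1 le_add1)
  have ds: "(a-2) div (2*k) = s"
    by (rule div_nat_eqI) (use st t2 in \<open>auto simp: algebra_simps\<close>)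
  have ds3: "(a-3) div (2*k) = s"
    by (rule div_nat_eqI) (use st t2 a3 in \<open>auto simp: algebra_simps\<close>)
  have f2: "ff k (a-2) = (if t = 1 then s+1 else s+2)"
    using ff_block[OF kp st(2,3), of s] st(1) todd by auto
  have "a - 1 = 2*k*s + (t+1)" using st a3 by simp
  then have f1: "ff k (a-1) = s+1"
    using ff_block[OF kp _ t2, of s] todd by auto
  show ?thesis
  proof (cases "t = 1")
    case True
    have "w (a-2) \<le> w (a-1)"
      using f1 f2 True by (intro add_mono mult_le_mono1) auto
    then have "Wm = w (a-1)" unfolding Wm_def by simp
    then have fr: "frob AA = int (ff k (a-1) * h * a + (a-1)*d) - int a" using frob_eq by simp
    show ?thesis using True unfolding fr f1 ds using ia by (simp; simp add: algebra_simps)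
  next
    case False
    have fr: "frob AA = max (int (w (a-1))) (int (w (a-2))) - int a" using frob_eq unfolding Wm_def by (simp add: of_nat_max)
    show ?thesis using False unfolding fr f1 f2 ds ds3 using ia by (simp; simp add: algebra_simps max_diff_distrib_left)
  qed
qed

end


lemma ceil_half:
  fixes t :: nat
  assumes "t \<ge> 1"
  shows "real_of_int \<lceil>real t / 2\<rceil> = real ((t-1) div 2) + 1"
proof -
  have "\<lceil>real t / 2\<rceil> = int ((t-1) div 2) + 1"
  proof (rule ceiling_unique)
    have e: "real t = 2 * real ((t-1) div 2) + (if even t then 2 else 1)"
    proof (cases "even t")
      case True
      then obtain q where "t = 2*q" by blast
      then show ?thesis using True assms by (cases q) auto
    next
      case False
      then obtain q where "t = 2*q+1" using oddE by blast
      then show ?thesis using False by simp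
    qed
    show "real_of_int (int ((t - 1) div 2) + 1) - 1 < real t / 2" using e by (auto split: if_splits)
    show "real t / 2 \<le> real_of_int (int ((t - 1) div 2) + 1)" using e by (auto split: if_splits)
  qed
  then show ?thesis by simp
qed

context frobl begin

lemma genus_formula:
  "let s = (a-2) div (2*k); t = a - 1 - 2*k*s in
       real (genus AA) =
         real h * (real s ^ 2 * real k + real s * real t - real s - 1)
         + (real a - 1) * (real h + real d / 2 - 1/2)
         + real h * real_of_int \<lceil>real t / 2\<rceil>"
proof -
  define s where "s = (a-2) div (2*k)"
  define t where "t = a - 1 - 2*k*s"
  have a3: "a \<ge> 3" using ak kp by simp
  have m: "a - 2 = 2*k*s + (a-2) mod (2*k)" unfolding s_def by simp
  have r: "(a-2) mod (2*k) < 2*k" using kp by simp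
  have tt: "t = (a-2) mod (2*k) + 1" unfolding t_def using m a3 by linarith
  have t1: "1 \<le> t" "t \<le> 2*k" using tt r by auto
  have aa: "a = 2*k*s + 1 + t" using tt m a3 by linarith
  have SF: "(\<Sum>x<a. ff k x) = (\<Sum>x<2*k*s+1. ff k x) + t*(s+1) + (t-1) div 2"
    using SF_part[OF kp t1(2), of s] aa by simp
  have E: "(\<Sum>x<2*k*s+1. ff k x) + s = k*s*s + 2*k*s" by (rule SF_E[OF kp])
  have G: "2 * (\<Sum>x<a. x*d div a) = (a-1)*(d-1)" by (rule floor_sum[OF cop ap])
  have gen: "genus AA = h * (\<Sum>x<a. ff k x) + (\<Sum>x<a. x*d div a)"
    unfolding genus_sum by (simp add: sum.distrib sum_distrib_left mult.commute)
  have c: "real_of_int \<lceil>real t / 2\<rceil> = real ((t-1) div 2) + 1" by (rule ceil_half[OF t1(1)])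
  define SFa where "SFa = (\<Sum>x<a. ff k x)"
  define Gs where "Gs = (\<Sum>x<a. x*d div a)"
  define c2 where "c2 = (t-1) div 2"
  have SF': "real SFa + real s = real k * real s * real s + 2 * real k * real s + real t * (real s + 1) + real c2"
  proof -
    have "SFa + s = k*s*s + 2*k*s + t*(s+1) + c2" unfolding SFa_def c2_def using SF E by linarith
    then have "real (SFa + s) = real (k*s*s + 2*k*s + t*(s+1) + c2)" by metis
    then show ?thesis by (simp add: algebra_simps)
  qed
  have G': "2 * real Gs = (real a - 1) * (real d - 1)"
  proof -
    have "real (2*Gs) = real ((a-1)*(d-1))" using G unfolding Gs_def by metis
    then show ?thesis using a3 dp by (simp add: of_nat_diff)
  qed
  have aa': "real a = 2 * real k * real s + 1 + real t"
  proof -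
    have "real a = real (2*k*s + 1 + t)" using aa by metis
    then show ?thesis by simp
  qed
  have gen': "real (genus AA) = real h * real SFa + real Gs"
  proof -
    have "real (genus AA) = real (h * SFa + Gs)" using gen unfolding SFa_def Gs_def by metis
    then show ?thesis by simp
  qed
  have "real (genus AA) =
         real h * (real s ^ 2 * real k + real s * real t - real s - 1)
         + (real a - 1) * (real h + real d / 2 - 1/2)
         + real h * real_of_int \<lceil>real t / 2\<rceil>"
  proof -
    have sfa: "real SFa = real k * real s * real s + 2 * real k * real s + real t * (real s + 1) + real c2 - real s"
      using SF' by linarith
    have gs: "real Gs = (real a - 1) * (real d - 1) / 2" using G' by linarith
    show ?thesis unfolding gen' sfa gs c c2_def[symmetric] aa'
      by (simp add: field_simps power2_eq_square)
  qed
  then show ?thesis unfolding s_def t_def Let_def .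
qed

end

theorem mainTheorem9:
  fixes a h d k :: nat
  assumes "coprime a d" and "a > 0" and "h > 0" and "d > 0" and "k > 0"
    and "a > 2" and "2 \<le> 2*k" and "2*k \<le> a - 1"
  shows
   "(even a \<longrightarrow> (\<forall>s t. a - 1 = 2*k*s + t \<and> 1 \<le> t \<and> t \<le> 2*k \<longrightarrow>
        frob (tupA a h d k) =
          (if t \<noteq> 1
           then int (h*a) * (int ((a-2) div (2*k)) + 2) + int (a-1) * int d - int a
           else int (h*a) * (int ((a-2) div (2*k)) + 1) + int (a-1) * int d - int a))) \<and>
    (odd a \<longrightarrow> (\<forall>s t. a - 2 = 2*k*s + t \<and> 1 \<le> t \<and> t \<le> 2*k \<longrightarrow>
        frob (tupA a h d k) =
          (if t \<noteq> 1
           then max (int (h*a) * (int ((a-2) div (2*k)) + 1) + int (a-1) * int d - int a)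
                    (int (h*a) * (int ((a-3) div (2*k)) + 2) + int (a-2) * int d - int a)
           else int (h*a) * (int ((a-2) div (2*k)) + 1) + int (a-1) * int d - int a))) \<and>
    (let s = (a-2) div (2*k); t = a - 1 - 2*k*s in
       real (genus (tupA a h d k)) =
         real h * (real s ^ 2 * real k + real s * real t - real s - 1)
         + (real a - 1) * (real h + real d / 2 - 1/2)
         + real h * real_of_int \<lceil>real t / 2\<rceil>)"
proof -
  interpret frobl a h d k
    by unfold_locales (use assms in auto)
  show ?thesis
    using frob_even frob_odd genus_formula by blast
qed


end
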